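(* Let $L\ge2$, $N\ge d_x$, and assume $X_\epsilon$ has rank $d_x$, $p\ge\mathrm{rank}\big(YX_\epsilon^T(X_\epsilon X_\epsilon^T)^{-1}\big)$, and the teacher interpolates the clean data: $\tilde W_{L:1}X=Y$. Then every global minimizer $(W_L^{base},\dots,W_1^{base})$ of $\mathcal L_{base}$ and every global minimizer $(W_L^{st},\dots,W_1^{st})$ of $\mathcal L_{st}$ satisfy $$W_{L:1}^{base}=W_{L:1}^{st}=YX_\epsilon^T(X_\epsilon X_\epsilon^T)^{-1}.$$
   Context: Clean inputs $x_i\in\mathbb R^{d_x}$, targets $y_i\in\mathbb R^{d_y}$, noise $\epsilon_i\in\mathbb R^{d_x}$, $i=1,\dots,N$; $X\in\mathbb R^{d_x\times N}$ has columns $x_i$, $X_\epsilon$ has columns $x_i+\epsilon_i$, $Y\in\mathbb R^{d_y\times N}$ has columns $y_i$. A deep linear network with $L$ layers is a tuple $(W_L,\dots,W_1)$ with $W_i\in\mathbb R^{d_i\times d_{i-1}}$, $d_0=d_x$, $d_L=d_y$; $W_{i:j}:=W_iW_{i-1}\cdots W_j$; $p:=\min_{0\le i\le L}d_i$. Base loss: $\mathcal L_{base}(W_L,\dots,W_1)=\|W_{L:1}X_\epsilon-Y\|_F^2$. Fix $i^*\in\{1,\dots,L\}$, $\lambda>0$ and teacher weights $(\tilde W_L,\dots,\tilde W_1)$ of the same shapes; the student–teacher loss is $\mathcal L_{st}(W_L,\dots,W_1)=\|W_{L:1}X_\epsilon-Y\|_F^2+\lambda\|W_{i^*:1}X_\epsilon-\tilde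 W_{i^*:1}X\|_F^2$. *)

theory Defs
  imports "Jordan_Normal_Form.DL_Rank" "Jordan_Normal_Form.Gauss_Jordan_Elimination"
begin

text \<open>A deep linear network with dimension list ds = [d_0, ..., d_L] is a list
  Ws = [W_1, ..., W_L] with Ws ! (i-1) = W_i of size d_i x d_(i-1).\<close>

definition net_shape :: "nat list \<Rightarrow> real mat list \<Rightarrow> bool" where
  "net_shape ds Ws \<longleftrightarrow> length ds = length Ws + 1 \<and>
     (\<forall>i < length Ws. Ws ! i \<in> carrier_mat (ds ! (Suc i)) (ds ! i))"

fun prod_net :: "nat \<Rightarrow> real mat list \<Rightarrow> nat \<Rightarrow> real mat" where
  "prod_net d0 Ws 0 = 1\<^sub>m d0"
| "prod_net d0 Ws (Suc k) = Ws ! k * prod_net d0 Ws k"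

definition frob_sq :: "real mat \<Rightarrow> real" where
  "frob_sq A = (\<Sum>i<dim_row A. \<Sum>j<dim_col A. (A $$ (i, j))^2)"

definition mrank :: "real mat \<Rightarrow> nat" where
  "mrank A = vec_space.rank (dim_row A) A"

definition minv :: "real mat \<Rightarrow> real mat" where
  "minv A = the (mat_inverse A)"

definition loss_base :: "real mat \<Rightarrow> real mat \<Rightarrow> real mat list \<Rightarrow> real" where
  "loss_base Xe Y Ws = frob_sq (prod_net (dim_row Xe) Ws (length Ws) * Xe - Y)"

definition loss_st :: "real mat \<Rightarrow> real mat \<Rightarrow> real mat \<Rightarrow> real mat list \<Rightarrow> nat \<Rightarrow> real
     \<Rightarrow> real mat list \<Rightarrow> real" where
  "loss_st X Xe Y Wt istar lam Ws =
     frob_sq (prod_net (dim_row Xe) Ws (length Ws) * Xe - Y)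
     + lam * frob_sq (prod_net (dim_row Xe) Ws istar * Xe - prod_net (dim_row X) Wt istar * X)"

end

theory Submission imports Defs begin

lemma frob_nonneg: "frob_sq A \<ge> 0"
  unfolding frob_sq_def by (intro sum_nonneg) auto

lemma frob_zero:
  assumes A: "A \<in> carrier_mat r c" and z: "frob_sq A = 0"
  shows "A = 0\<^sub>m r c"
proof (rule eq_matI)
  fix i j assume ij: "i < dim_row (0\<^sub>m r c :: real mat)" "j < dim_col (0\<^sub>m r c :: real mat)"
  have "(\<Sum>j<c. (A $$ (i, j))^2) = 0"
    using z A ij unfolding frob_sq_def
    by (subst (asm) sum_nonneg_eq_0_iff) (auto intro!: sum_nonneg)
  then have "(A $$ (i, j))^2 = 0" using ij
    by (subst (asm) sum_nonneg_eq_0_iff) auto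
  then show "A $$ (i, j) = 0\<^sub>m r c $$ (i, j)" using ij by simp
qed (use A in auto)

lemma frob_split:
  assumes A: "A \<in> carrier_mat r c" and B: "B \<in> carrier_mat r c"
    and cr: "(\<Sum>i<r. \<Sum>j<c. A $$ (i,j) * B $$ (i,j)) = 0"
  shows "frob_sq (A + B) = frob_sq A + frob_sq B"
proof -
  have "frob_sq (A + B) = (\<Sum>i<r. \<Sum>j<c. (A $$ (i,j))^2 + (B $$ (i,j))^2 + 2 * (A $$ (i,j) * B $$ (i,j)))"
    unfolding frob_sq_def using A B by (auto intro!: sum.cong simp: power2_eq_square algebra_simps)
  also have "\<dots> = frob_sq A + frob_sq B + 2 * (\<Sum>i<r. \<Sum>j<c. A $$ (i,j) * B $$ (i,j))"
    unfolding frob_sq_def using A B by (simp add: sum.distrib sum_distrib_left)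
  finally show ?thesis using cr by simp
qed

lemma cross_zero:
  fixes D Xe R :: "real mat"
  assumes D: "D \<in> carrier_mat r n" and Xe: "Xe \<in> carrier_mat n N" and R: "R \<in> carrier_mat r N"
    and RX: "R * transpose_mat Xe = 0\<^sub>m r n"
  shows "(\<Sum>i<r. \<Sum>j<N. (D * Xe) $$ (i,j) * R $$ (i,j)) = 0"
proof -
  have e1: "(D * Xe) $$ (i,j) = (\<Sum>k<n. D $$ (i,k) * Xe $$ (k,j))" if "i < r" "j < N" for i j
    using D Xe that by (auto simp: scalar_prod_def lessThan_atLeast0 intro!: sum.cong)
  have e2: "(\<Sum>j<N. R $$ (i,j) * Xe $$ (k,j)) = 0" if "i < r" "k < n" for i k
  proof -
    have "(R * transpose_mat Xe) $$ (i,k) = 0" using RX that by simp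
    then show ?thesis using R Xe that by (auto simp: scalar_prod_def lessThan_atLeast0)
  qed
  have "(\<Sum>i<r. \<Sum>j<N. (D * Xe) $$ (i,j) * R $$ (i,j))
      = (\<Sum>i<r. \<Sum>j<N. \<Sum>k<n. D $$ (i,k) * (R $$ (i,j) * Xe $$ (k,j)))"
    by (auto simp: e1 sum_distrib_left sum_distrib_right mult.left_commute mult.commute intro!: sum.cong)
  also have "\<dots> = (\<Sum>i<r. \<Sum>k<n. D $$ (i,k) * (\<Sum>j<N. R $$ (i,j) * Xe $$ (k,j)))"
    by (auto simp: sum_distrib_left intro!: sum.cong sum.swap)
  also have "\<dots> = 0" by (auto simp: e2 intro!: sum.neutral)
  finally show ?thesis .
qed

lemma mat_telescope:
  fixes A B C :: "real mat"
  assumes "A \<in> carrier_mat r c" "B \<in> carrier_mat r c" "C \<in> carrier_mat r c"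
  shows "A - C = (A - B) + (B - C)"
  using assms by (intro eq_matI) (auto simp: carrier_matD)

lemma ls_opt:
  fixes Xe C W Mi :: "real mat"
  assumes Xe: "Xe \<in> carrier_mat n N" and C: "C \<in> carrier_mat r N" and W: "W \<in> carrier_mat r n"
    and Mi: "Mi \<in> carrier_mat n n"
    and inv1: "Xe * transpose_mat Xe * Mi = 1\<^sub>m n" and inv2: "Mi * (Xe * transpose_mat Xe) = 1\<^sub>m n"
  shows "frob_sq (W * Xe - C) = frob_sq ((W - C * transpose_mat Xe * Mi) * Xe) + frob_sq (C * transpose_mat Xe * Mi * Xe - C)"
    and "frob_sq ((W - C * transpose_mat Xe * Mi) * Xe) = 0 \<Longrightarrow> W = C * transpose_mat Xe * Mi"
proof -
  define Wo where "Wo = C * transpose_mat Xe * Mi"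
  have XT: "transpose_mat Xe \<in> carrier_mat N n" using Xe by simp
  have Wo: "Wo \<in> carrier_mat r n" unfolding Wo_def using C XT Mi by auto
  have P: "C * transpose_mat Xe \<in> carrier_mat r n" using C XT by simp
  have "Wo * Xe * transpose_mat Xe = Wo * (Xe * transpose_mat Xe)"
    using Wo Xe XT by (rule assoc_mult_mat)
  also have "\<dots> = C * transpose_mat Xe * (Mi * (Xe * transpose_mat Xe))"
    unfolding Wo_def by (rule assoc_mult_mat[OF P Mi, of _ n]) (use Xe XT in simp)
  finally have "Wo * Xe * transpose_mat Xe = C * transpose_mat Xe * (Mi * (Xe * transpose_mat Xe))" .
  also have "\<dots> = C * transpose_mat Xe" unfolding inv2 using P by (rule right_mult_one_mat)
  finally have RX: "(Wo * Xe - C) * transpose_mat Xe = 0\<^sub>m r n"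
    using Wo Xe C XT by (subst minus_mult_distrib_mat[of _ r N]) (auto intro!: eq_matI simp del: assoc_mult_mat)
  have D: "W - Wo \<in> carrier_mat r n" using Wo by (rule minus_carrier_mat)
  have DX: "(W - Wo) * Xe = W * Xe - Wo * Xe"
    using W Wo Xe by (rule minus_mult_distrib_mat)
  have WX: "W * Xe \<in> carrier_mat r N" using W Xe by simp
  have WoX: "Wo * Xe \<in> carrier_mat r N" using Wo Xe by simp
  have DXc: "(W - Wo) * Xe \<in> carrier_mat r N" using D Xe by simp
  have Rc: "Wo * Xe - C \<in> carrier_mat r N" using C by (rule minus_carrier_mat)
  have sum: "W * Xe - C = (W - Wo) * Xe + (Wo * Xe - C)"
    unfolding DX by (rule mat_telescope[OF WX WoX C])
  have cz: "(\<Sum>i<r. \<Sum>j<N. ((W - Wo) * Xe) $$ (i,j) * (Wo * Xe - C) $$ (i,j)) = 0"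
    by (rule cross_zero[OF D Xe Rc RX])
  show "frob_sq (W * Xe - C) = frob_sq ((W - C * transpose_mat Xe * Mi) * Xe) + frob_sq (C * transpose_mat Xe * Mi * Xe - C)"
    unfolding Wo_def[symmetric] sum by (rule frob_split[OF DXc Rc cz])
  assume "frob_sq ((W - C * transpose_mat Xe * Mi) * Xe) = 0"
  then have z: "(W - Wo) * Xe = 0\<^sub>m r N" using frob_zero[OF DXc] unfolding Wo_def by auto
  have "W - Wo = (W - Wo) * (Xe * transpose_mat Xe * Mi)" unfolding inv1 using D by (rule right_mult_one_mat[symmetric])
  also have "\<dots> = ((W - Wo) * (Xe * transpose_mat Xe)) * Mi"
    using D Mi Xe XT by (intro assoc_mult_mat[symmetric, of _ r n _ n _ n]) auto
  also have "(W - Wo) * (Xe * transpose_mat Xe) = ((W - Wo) * Xe) * transpose_mat Xe"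
    using D Xe XT by (rule assoc_mult_mat[symmetric])
  also have "\<dots> = 0\<^sub>m r n" unfolding z using XT by (rule left_mult_zero_mat)
  also have "0\<^sub>m r n * Mi = 0\<^sub>m r n" using Mi by (rule left_mult_zero_mat)
  finally have "W - Wo = 0\<^sub>m r n" .
  then show "W = Wo" unfolding Wo_def[symmetric] using W Wo
  proof (intro eq_matI)
    fix i j assume "W - Wo = 0\<^sub>m r n" "i < dim_row Wo" "j < dim_col Wo"
    then have "(W - Wo) $$ (i,j) = 0" using Wo by (simp add: carrier_matD)
    then show "W $$ (i,j) = Wo $$ (i,j)" using \<open>i < dim_row Wo\<close> \<open>j < dim_col Wo\<close> by simp
  qed (auto simp: carrier_matD)
qed
context vec_space begin
lemma full_rank_span:
  assumes A: "A \<in> carrier_mat n nc" and r: "rank A = n"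
  shows "span (set (cols A)) = carrier_vec n"
proof -
  have li0: "lin_indpt {}" by (simp add: lin_dep_def)
  obtain S where S: "finite S" "maximal S (\<lambda>T. T \<subseteq> set (cols A) \<and> lin_indpt T)"
    using maximal_exists_superset[of "set (cols A)" "(\<lambda>T. T \<subseteq> set (cols A) \<and> lin_indpt T)" "{}"] li0
    by auto
  have cS: "card S = n" using rank_card_indpt[OF A S(2)] r by simp
  have Ssub: "S \<subseteq> set (cols A)" "lin_indpt S" using S(2) unfolding maximal_def by auto
  have colsc: "set (cols A) \<subseteq> carrier_vec n" using A cols_dim by blast
  have "basis S" by (rule dim_li_is_basis) (use S Ssub colsc cS dim_is_n in auto)
  then have "span S = carrier_vec n" unfolding basis_def by simp
  moreover have "span S \<subseteq> span (set (cols A))" using span_is_monotone Ssub by metis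
  moreover have "span (set (cols A)) \<subseteq> carrier_vec n" using colsc span_closed by auto
  ultimately show ?thesis by auto
qed
end

lemma self_dot_zero:
  fixes v :: "real vec"
  assumes v: "v \<in> carrier_vec n" and z: "v \<bullet> v = 0"
  shows "v = 0\<^sub>v n"
proof (rule eq_vecI)
  fix i assume i: "i < dim_vec (0\<^sub>v n :: real vec)"
  have "(\<Sum>k\<in>{0..<n}. v $ k * v $ k) = 0" using z v by (simp add: scalar_prod_def)
  then have "v $ i * v $ i = 0" using i by (subst (asm) sum_nonneg_eq_0_iff) auto
  then show "v $ i = 0\<^sub>v n $ i" using i by simp
qed (use v in auto)

lemma gram_inv:
  fixes Xe :: "real mat"
  assumes Xe: "Xe \<in> carrier_mat n N" and r: "mrank Xe = n"
  shows "Xe * transpose_mat Xe * minv (Xe * transpose_mat Xe) = 1\<^sub>m n"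
    "minv (Xe * transpose_mat Xe) * (Xe * transpose_mat Xe) = 1\<^sub>m n"
    "minv (Xe * transpose_mat Xe) \<in> carrier_mat n n"
proof -
  interpret V: vec_space "TYPE(real)" n .
  define M where "M = Xe * transpose_mat Xe"
  have XT: "transpose_mat Xe \<in> carrier_mat N n" using Xe by simp
  have Mc: "M \<in> carrier_mat n n" unfolding M_def using Xe XT by simp
  have rk: "V.rank Xe = n" using r Xe unfolding mrank_def by (simp add: carrier_matD)
  have span: "V.span (set (cols Xe)) = carrier_vec n" by (rule V.full_rank_span[OF Xe rk])
  have det: "det M \<noteq> 0"
  proof
    assume "det M = 0"
    then obtain v where v: "v \<in> carrier_vec n" "v \<noteq> 0\<^sub>v n" "M *\<^sub>v v = 0\<^sub>v n"
      using det_0_iff_vec_prod_zero_field[OF Mc] by auto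
    define u where "u = transpose_mat Xe *\<^sub>v v"
    have u: "u \<in> carrier_vec N" unfolding u_def using XT v by simp
    have Mv: "M *\<^sub>v v = Xe *\<^sub>v u" unfolding M_def u_def using Xe XT v by simp
    have "(transpose_mat Xe *\<^sub>v v) \<bullet> u = v \<bullet> (Xe *\<^sub>v u)"
      by (rule transpose_vec_mult_scalar[OF Xe u v(1)])
    then have "u \<bullet> u = v \<bullet> (Xe *\<^sub>v u)" unfolding u_def[symmetric] .
    also have "\<dots> = 0" using v Mv by simp
    finally have u0: "u = 0\<^sub>v N" using self_dot_zero[OF u] by simp
    have "v \<in> V.col_space Xe" using span v unfolding V.col_space_def by simp
    then obtain x where x: "x \<in> carrier_vec N" "Xe *\<^sub>v x = v"
      using V.col_space_eq[OF Xe] Xe by auto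
    have "v \<bullet> v = v \<bullet> (Xe *\<^sub>v x)" using x by simp
    also have "\<dots> = u \<bullet> x" unfolding u_def
      by (rule transpose_vec_mult_scalar[OF Xe x(1) v(1), symmetric])
    also have "\<dots> = 0" using u0 x by simp
    finally have "v = 0\<^sub>v n" using self_dot_zero[OF v(1)] by simp
    with v show False by simp
  qed
  have U: "M \<in> Units (ring_mat TYPE(real) n ())" by (rule det_non_zero_imp_unit[OF Mc det])
  obtain B where B: "mat_inverse M = Some B"
    using mat_inverse(1)[OF Mc, of "()"] U by (cases "mat_inverse M") auto
  have "M * B = 1\<^sub>m n \<and> B * M = 1\<^sub>m n \<and> B \<in> carrier_mat n n" by (rule mat_inverse(2)[OF Mc B])
  moreover have "minv M = B" unfolding minv_def B by simp
  ultimately show "Xe * transpose_mat Xe * minv (Xe * transpose_mat Xe) = 1\<^sub>m n"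
    "minv (Xe * transpose_mat Xe) * (Xe * transpose_mat Xe) = 1\<^sub>m n"
    "minv (Xe * transpose_mat Xe) \<in> carrier_mat n n" unfolding M_def by auto
qed

lemma prod_shape:
  assumes sh: "net_shape ds Ws" and k: "k \<le> length Ws"
  shows "prod_net (ds ! 0) Ws k \<in> carrier_mat (ds ! k) (ds ! 0)"
  using k
proof (induction k)
  case 0 then show ?case by simp
next
  case (Suc k)
  have "Ws ! k \<in> carrier_mat (ds ! Suc k) (ds ! k)" using sh Suc.prems unfolding net_shape_def by auto
  moreover have "prod_net (ds ! 0) Ws k \<in> carrier_mat (ds ! k) (ds ! 0)" using Suc by simp
  ultimately show ?case by simp
qed

lemma prod_mod:
  assumes sh: "net_shape ds Ws" and G: "G \<in> carrier_mat (ds ! 0) (ds ! 0)"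
    and k: "1 \<le> k" "k \<le> length Ws"
  shows "prod_net (ds ! 0) (Ws[0 := Ws ! 0 * G]) k = prod_net (ds ! 0) Ws k * G"
  using k
proof (induction k)
  case 0 then show ?case by simp
next
  case (Suc k)
  have "0 < length Ws" using Suc.prems by linarith
  then have W0: "Ws ! 0 \<in> carrier_mat (ds ! 1) (ds ! 0)" using sh unfolding net_shape_def by auto
  have Wk: "Ws ! k \<in> carrier_mat (ds ! Suc k) (ds ! k)" using sh Suc.prems unfolding net_shape_def by auto
  show ?case
  proof (cases "k = 0")
    case True
    then show ?thesis using W0 G Suc.prems \<open>0 < length Ws\<close> by simp
  next
    case False
    have P: "prod_net (ds ! 0) Ws k \<in> carrier_mat (ds ! k) (ds ! 0)" using prod_shape[OF sh] Suc.prems by simp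
    have "prod_net (ds ! 0) (Ws[0 := Ws ! 0 * G]) (Suc k) = Ws ! k * (prod_net (ds ! 0) Ws k * G)"
      using False Suc by simp
    also have "\<dots> = Ws ! k * prod_net (ds ! 0) Ws k * G"
      by (rule assoc_mult_mat[OF Wk P G, symmetric])
    finally show ?thesis by simp
  qed
qed

lemma shape_mod:
  assumes sh: "net_shape ds Ws" and G: "G \<in> carrier_mat (ds ! 0) (ds ! 0)" and l: "length Ws \<ge> 1"
  shows "net_shape ds (Ws[0 := Ws ! 0 * G])"
  unfolding net_shape_def
proof (intro conjI allI impI)
  show "length ds = length (Ws[0 := Ws ! 0 * G]) + 1" using sh unfolding net_shape_def by simp
  fix i assume i: "i < length (Ws[0 := Ws ! 0 * G])"
  have Wi: "Ws ! i \<in> carrier_mat (ds ! Suc i) (ds ! i)" using sh i unfolding net_shape_def by auto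
  show "Ws[0 := Ws ! 0 * G] ! i \<in> carrier_mat (ds ! Suc i) (ds ! i)"
  proof (cases "i = 0")
    case True then show ?thesis using Wi G i by simp
  next
    case False then show ?thesis using Wi i by simp
  qed
qed

lemma assoc4:
  fixes P X XT Mi :: "real mat"
  assumes "P \<in> carrier_mat a n" "X \<in> carrier_mat n N" "XT \<in> carrier_mat N n" "Mi \<in> carrier_mat n n"
  shows "P * (X * XT * Mi) = P * X * XT * Mi"
proof -
  have "P * (X * XT * Mi) = P * (X * XT) * Mi" using assms by (intro assoc_mult_mat[symmetric]) auto
  also have "P * (X * XT) = P * X * XT" using assms by (intro assoc_mult_mat[symmetric]) auto
  finally show ?thesis .
qed

theorem theorem2:
  fixes ds :: "nat list" and N :: nat
    and X E Y :: "real mat" and Wt Wb Ws :: "real mat list"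
    and istar :: nat and lam :: real
  defines "L \<equiv> length ds - 1"
  defines "Xe \<equiv> X + E"
  defines "Wopt \<equiv> Y * transpose_mat Xe * minv (Xe * transpose_mat Xe)"
  assumes L2: "L \<ge> 2"
    and X_dim: "X \<in> carrier_mat (ds ! 0) N"
    and E_dim: "E \<in> carrier_mat (ds ! 0) N"
    and Y_dim: "Y \<in> carrier_mat (ds ! L) N"
    and N_ge: "N \<ge> ds ! 0"
    and rank_Xe: "mrank Xe = ds ! 0"
    and p_ge: "Min (set ds) \<ge> mrank Wopt"
    and istar: "1 \<le> istar" "istar \<le> L"
    and lam: "lam > 0"
    and Wt_shape: "net_shape ds Wt"
    and teacher: "prod_net (ds ! 0) Wt L * X = Y"
    and Wb_shape: "net_shape ds Wb"
    and Wb_min: "\<forall>V. net_shape ds V \<longrightarrow> loss_base Xe Y Wb \<le> loss_base Xe Y V"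
    and Ws_shape: "net_shape ds Ws"
    and Ws_min: "\<forall>V. net_shape ds V \<longrightarrow> loss_st X Xe Y Wt istar lam Ws \<le> loss_st X Xe Y Wt istar lam V"
  shows "prod_net (ds ! 0) Wb L = Wopt \<and> prod_net (ds ! 0) Ws L = Wopt"
proof -
  define d0 where "d0 = ds ! 0"
  have lenWt: "length Wt = L" using Wt_shape unfolding net_shape_def L_def by simp
  have lenWb: "length Wb = L" using Wb_shape unfolding net_shape_def L_def by simp
  have lenWs: "length Ws = L" using Ws_shape unfolding net_shape_def L_def by simp
  have Xe: "Xe \<in> carrier_mat d0 N" unfolding Xe_def d0_def using X_dim E_dim by simp
  have X: "X \<in> carrier_mat d0 N" unfolding d0_def using X_dim .
  have rowXe: "dim_row Xe = d0" "dim_row X = d0" using Xe X by auto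
  define Mi where "Mi = minv (Xe * transpose_mat Xe)"
  have rk: "mrank Xe = d0" using rank_Xe unfolding d0_def .
  note gi = gram_inv[OF Xe rk, folded Mi_def]
  have XT: "transpose_mat Xe \<in> carrier_mat N d0" using Xe by simp
  define G where "G = X * transpose_mat Xe * Mi"
  have G: "G \<in> carrier_mat (ds ! 0) (ds ! 0)" unfolding G_def d0_def[symmetric] using X XT gi(3) by simp
  define V where "V = Wt[0 := Wt ! 0 * G]"
  have Vsh: "net_shape ds V" unfolding V_def using shape_mod[OF Wt_shape G] lenWt L2 by simp
  have PtL: "prod_net d0 Wt L \<in> carrier_mat (ds ! L) d0"
    using prod_shape[OF Wt_shape, of L] lenWt unfolding d0_def by simp
  have Pti: "prod_net d0 Wt istar \<in> carrier_mat (ds ! istar) d0"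
    using prod_shape[OF Wt_shape, of istar] lenWt istar unfolding d0_def by simp
  have VL: "prod_net d0 V L = Wopt"
  proof -
    have "prod_net d0 V L = prod_net d0 Wt L * G"
      unfolding V_def d0_def using prod_mod[OF Wt_shape G, of L] lenWt L2 by simp
    also have "\<dots> = prod_net d0 Wt L * X * transpose_mat Xe * Mi"
      unfolding G_def by (rule assoc4[OF PtL X XT gi(3)])
    also have "\<dots> = Wopt" unfolding Wopt_def Mi_def using teacher unfolding d0_def by simp
    finally show ?thesis .
  qed
  define C where "C = prod_net d0 Wt istar * X"
  have Cc: "C \<in> carrier_mat (ds ! istar) N" unfolding C_def using Pti X by simp
  have Vi: "prod_net d0 V istar = C * transpose_mat Xe * Mi"
  proof -
    have "prod_net d0 V istar = prod_net d0 Wt istar * G"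
      unfolding V_def d0_def using prod_mod[OF Wt_shape G, of istar] lenWt istar by simp
    also have "\<dots> = C * transpose_mat Xe * Mi"
      unfolding G_def C_def by (rule assoc4[OF Pti X XT gi(3)])
    finally show ?thesis .
  qed
  have Yc: "Y \<in> carrier_mat (ds ! L) N" using Y_dim .
  note ls_Y = ls_opt[OF Xe Yc _ gi(3) gi(1) gi(2), folded Mi_def]
  note ls_C = ls_opt[OF Xe Cc _ gi(3) gi(1) gi(2), folded Mi_def]
  have WoptM: "Wopt = Y * transpose_mat Xe * Mi" unfolding Wopt_def Mi_def ..
  define Pb where "Pb = prod_net d0 Wb L"
  have Pb: "Pb \<in> carrier_mat (ds ! L) d0"
    using prod_shape[OF Wb_shape, of L] lenWb unfolding Pb_def d0_def by simp
  have "loss_base Xe Y Wb \<le> loss_base Xe Y V" using Wb_min Vsh by blast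
  then have "frob_sq (Pb * Xe - Y) \<le> frob_sq (Wopt * Xe - Y)"
    unfolding loss_base_def rowXe lenWb Pb_def using lenWt VL unfolding V_def by simp
  then have "frob_sq ((Pb - Wopt) * Xe) \<le> 0"
    unfolding ls_Y(1)[OF Pb] WoptM by simp
  then have "frob_sq ((Pb - Wopt) * Xe) = 0" using frob_nonneg by (meson antisym)
  then have b: "Pb = Wopt" using ls_Y(2)[OF Pb] unfolding WoptM by simp
  define Ps where "Ps = prod_net d0 Ws L"
  have Ps: "Ps \<in> carrier_mat (ds ! L) d0"
    using prod_shape[OF Ws_shape, of L] lenWs unfolding Ps_def d0_def by simp
  define Qs where "Qs = prod_net d0 Ws istar"
  have Qs: "Qs \<in> carrier_mat (ds ! istar) d0"
    using prod_shape[OF Ws_shape, of istar] lenWs istar unfolding Qs_def d0_def by simp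
  have "loss_st X Xe Y Wt istar lam Ws \<le> loss_st X Xe Y Wt istar lam V" using Ws_min Vsh by blast
  then have "frob_sq (Ps * Xe - Y) + lam * frob_sq (Qs * Xe - C)
      \<le> frob_sq (Wopt * Xe - Y) + lam * frob_sq (C * transpose_mat Xe * Mi * Xe - C)"
    unfolding loss_st_def rowXe lenWs Ps_def Qs_def C_def[symmetric] using lenWt VL Vi unfolding V_def by simp
  then have "frob_sq ((Ps - Wopt) * Xe) + lam * frob_sq ((Qs - C * transpose_mat Xe * Mi) * Xe) \<le> 0"
    unfolding ls_Y(1)[OF Ps] ls_C(1)[OF Qs] WoptM by (simp add: algebra_simps)
  moreover have "lam * frob_sq ((Qs - C * transpose_mat Xe * Mi) * Xe) \<ge> 0"
    using lam frob_nonneg by simp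
  moreover have "frob_sq ((Ps - Wopt) * Xe) \<ge> 0" by (rule frob_nonneg)
  ultimately have "frob_sq ((Ps - Wopt) * Xe) = 0" by linarith
  then have s: "Ps = Wopt" using ls_Y(2)[OF Ps] unfolding WoptM by simp
  show ?thesis using b s unfolding Pb_def Ps_def d0_def by blast
qed
end
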